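(* Let $(M,d)$ be a compact metric space, let $f:M\to M$ be a homeomorphism satisfying the Anosov Closing property, and let $A:M\to M(d,\mathbb{R})$ be an $\alpha$-H\"older continuous map for some $\alpha>0$. Suppose there exists $c\in\mathbb{R}$ such that for every periodic point $p$ of $f$, all Lyapunov exponents of $(f,A)$ at $p$ are $\ge c$. Then for every $f$-invariant Borel probability measure $\mu$ on $M$, $A(x)\in GL(d,\mathbb{R})$ for $\mu$-almost every $x\in M$.
   Context: $M(d,\mathbb{R})$ is the set of real $d\times d$ matrices with the operator norm. $A$ is $\alpha$-H\"older if $\|A(x)-A(y)\|\le C_2d(x,y)^\alpha$ for some $C_2>0$ and all $x,y$. The cocycle is $A^n(x)=A(f^{n-1}(x))\cdots A(x)$, $A^0=\mathrm{Id}$. $f$ satisfies the Anosov Closing property if there exist $C_1,\varepsilon_0,\theta>0$ such that whenever $d(f^n(z),z)<\varepsilon_0$ there is $p$ with $f^n(p)=p$ and $d(f^j(z),f^j(p))\le C_1e^{-\theta\min\{j,n-j\}}d(f^n(z),z)$ for $j=0,\dots,n$. The Lyapunov exponents of $(f,A)$ at a periodic point $p$ are the (possibly $-\infty$) Lyapunov exponents of the cocycle with respect to the invariant probability measure equidistributed on the orbit of $p$, i.e. the values $\lim_{n\to\infty}\frac1n\log\|A^n(p)v\|$, $v\neq0$. *)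

theory Defs
  imports "HOL-Analysis.Analysis" "HOL-Probability.Probability"
begin

fun cocycle :: "('a \<Rightarrow> 'a) \<Rightarrow> ('a \<Rightarrow> real^'n^'n) \<Rightarrow> nat \<Rightarrow> 'a \<Rightarrow> real^'n^'n" where
  "cocycle f A 0 x = mat 1"
| "cocycle f A (Suc n) x = A ((f ^^ n) x) ** cocycle f A n x"

definition opnorm :: "real^'n^'m \<Rightarrow> real" where
  "opnorm M = onorm (\<lambda>v. M *v v)"

definition anosov_closing :: "('a::metric_space \<Rightarrow> 'a) \<Rightarrow> bool" where
  "anosov_closing f \<longleftrightarrow> (\<exists>C1 eps0 \<theta>. C1 > 0 \<and> eps0 > 0 \<and> \<theta> > 0 \<and>
     (\<forall>z n. dist ((f ^^ n) z) z < eps0 \<longrightarrow>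
        (\<exists>p. (f ^^ n) p = p \<and>
           (\<forall>j\<le>n. dist ((f ^^ j) z) ((f ^^ j) p)
                    \<le> C1 * exp (- \<theta> * real (min j (n - j))) * dist ((f ^^ n) z) z))))"

definition holder :: "real \<Rightarrow> ('a::metric_space \<Rightarrow> real^'n^'n) \<Rightarrow> bool" where
  "holder \<alpha> A \<longleftrightarrow> (\<exists>C2 > 0. \<forall>x y. opnorm (A x - A y) \<le> C2 * dist x y powr \<alpha>)"

definition periodic_point :: "('a \<Rightarrow> 'a) \<Rightarrow> 'a \<Rightarrow> bool" where
  "periodic_point f p \<longleftrightarrow> (\<exists>n>0. (f ^^ n) p = p)"

definition ereal_log_rate :: "nat \<Rightarrow> real \<Rightarrow> ereal" where
  "ereal_log_rate n t = (if t = 0 then -\<infinity> else ereal (ln t / real n))"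

definition lyapunov_exponents :: "('a \<Rightarrow> 'a) \<Rightarrow> ('a \<Rightarrow> real^'n^'n) \<Rightarrow> 'a \<Rightarrow> ereal set" where
  "lyapunov_exponents f A p = {L. \<exists>v. v \<noteq> 0 \<and>
      ((\<lambda>n. ereal_log_rate n (norm (cocycle f A n p *v v))) \<longlongrightarrow> L) sequentially}"

definition invariant_measure :: "('a \<Rightarrow> 'a) \<Rightarrow> 'a measure \<Rightarrow> bool" where
  "invariant_measure f \<mu> \<longleftrightarrow> f \<in> measurable \<mu> \<mu> \<and>
     (\<forall>B\<in>sets \<mu>. emeasure \<mu> (f -` B \<inter> space \<mu>) = emeasure \<mu> B)"

end

theory Submission
  imports Defs "Jordan_Normal_Form.Char_Poly"
begin


definition idx :: "nat \<Rightarrow> 'd::finite" where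
  "idx = (SOME h. bij_betw h {0..<CARD('d)} (UNIV::'d set))"

lemma bij_idx: "bij_betw (idx::nat\<Rightarrow>'d::finite) {0..<CARD('d)} UNIV"
proof -
  have "\<exists>h. bij_betw h {0..<CARD('d)} (UNIV::'d set)"
    using ex_bij_betw_nat_finite[of "UNIV::'d set"] by auto
  then show ?thesis unfolding idx_def by (rule someI_ex)
qed

definition idxi :: "'d::finite \<Rightarrow> nat" where
  "idxi = inv_into {0..<CARD('d)} idx"

lemma idxi_lt: "idxi (i::'d::finite) < CARD('d)"
  using bij_idx unfolding idxi_def
  by (metis atLeastLessThan_iff bij_betw_def inv_into_into UNIV_I)

lemma idx_idxi[simp]: "idx (idxi (i::'d::finite)) = i"
  using bij_idx unfolding idxi_def by (metis bij_betw_inv_into_right UNIV_I)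

lemma idxi_idx[simp]: "k < CARD('d) \<Longrightarrow> idxi (idx k :: 'd::finite) = k"
  using bij_idx unfolding idxi_def by (metis bij_betw_inv_into_left atLeastLessThan_iff le0)

lemma bij_idxi: "bij_betw (idxi::'d::finite \<Rightarrow> nat) UNIV {0..<CARD('d)}"
  using bij_idx unfolding idxi_def by (rule bij_betw_inv_into)

definition toJ :: "'a^'d^'d \<Rightarrow> 'a Matrix.mat" where
  "toJ X = Matrix.mat CARD('d::finite) CARD('d) (\<lambda>(i,j). X $ idx i $ idx j)"

lemma toJ_carrier: "toJ (X::'a^'d::finite^'d) \<in> carrier_mat CARD('d) CARD('d)"
  unfolding toJ_def by auto

lemma det_toJ: "Determinant.det (toJ X) = Determinants.det (X :: 'a::comm_ring_1^'d::finite^'d)"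
proof -
  let ?n = "CARD('d)"
  let ?PU = "{q. q permutes (UNIV::'d set)}"
  let ?PN = "{p. p permutes {0..<?n}}"
  define Phi where "Phi = (\<lambda>q::'d\<Rightarrow>'d. \<lambda>x. if x \<in> {0..<?n} then idxi (q (idx x)) else x)"
  define Psi where "Psi = (\<lambda>p::nat\<Rightarrow>nat. \<lambda>x::'d. if x \<in> UNIV then idx (p (idxi x)) else x)"
  have loc1: "permutes_bij q (UNIV::'d set) {0..<?n} idxi idx" if "q permutes (UNIV::'d set)" for q
    using that bij_idxi by unfold_locales auto
  have loc2: "permutes_bij p {0..<?n} (UNIV::'d set) idx idxi" if "p permutes {0..<?n}" for p
    using that bij_idx by unfold_locales auto
  have bij: "bij_betw Phi ?PU ?PN"
  proof (rule bij_betw_byWitness[where f'=Psi])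
    show "\<forall>q\<in>?PU. Psi (Phi q) = q"
      by (auto simp: Phi_def Psi_def idxi_lt fun_eq_iff)
    show "\<forall>p\<in>?PN. Phi (Psi p) = p"
    proof
      fix p assume "p \<in> ?PN"
      then have p: "p permutes {0..<?n}" by simp
      show "Phi (Psi p) = p"
      proof
        fix x show "Phi (Psi p) x = p x"
          using p permutes_not_in[OF p, of x] permutes_in_image[OF p, of x]
          by (auto simp: Phi_def Psi_def)
      qed
    qed
    show "Phi ` ?PU \<subseteq> ?PN"
      using permutes_bij.permutes_p'[OF loc1] by (auto simp: Phi_def)
    show "Psi ` ?PN \<subseteq> ?PU"
      using permutes_bij.permutes_p'[OF loc2] by (auto simp: Psi_def)
  qed
  have "Determinant.det (toJ X) = (\<Sum>p\<in>?PN. signof p * (\<Prod>k = 0..<?n. toJ X $$ (k, p k)))"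
    by (rule det_def'[OF toJ_carrier])
  also have "\<dots> = (\<Sum>q\<in>?PU. signof (Phi q) * (\<Prod>k = 0..<?n. toJ X $$ (k, Phi q k)))"
    by (rule sum.reindex_bij_betw[OF bij, symmetric])
  also have "\<dots> = (\<Sum>q\<in>?PU. of_int (sign q) * (\<Prod>i\<in>UNIV. X $ i $ q i))"
  proof (rule sum.cong[OF refl])
    fix q assume "q \<in> ?PU"
    then have q: "q permutes UNIV" by simp
    have s: "sign (Phi q) = sign q"
      using permutes_bij_finite.sign_p'[of q UNIV "{0..<?n}" idxi idx] loc1[OF q]
      unfolding Phi_def permutes_bij_finite_def permutes_bij_finite_axioms_def by auto
    have "(\<Prod>k = 0..<?n. toJ X $$ (k, Phi q k)) = (\<Prod>k = 0..<?n. X $ idx k $ q (idx k))"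
      by (rule prod.cong) (auto simp: toJ_def Phi_def idxi_lt)
    also have "\<dots> = (\<Prod>i\<in>UNIV. X $ i $ q i)"
      by (rule prod.reindex_bij_betw[OF bij_idx])
    finally show "signof (Phi q) * (\<Prod>k = 0..<?n. toJ X $$ (k, Phi q k)) = of_int (sign q) * (\<Prod>i\<in>UNIV. X $ i $ q i)"
      using s by simp
  qed
  also have "\<dots> = Determinants.det X" unfolding Determinants.det_def ..
  finally show ?thesis .
qed

lemma prod_list_lower:
  assumes "\<forall>a\<in>set as. x \<le> cmod a" "0 \<le> x"
  shows "x ^ length as \<le> cmod (prod_list (map (\<lambda>a. - a) (as::complex list)))"
  using assms
proof (induction as)
  case Nil then show ?case by simp
next
  case (Cons a as)
  then have "x * x ^ length as \<le> cmod a * cmod (prod_list (map (\<lambda>a. - a) as))"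
    by (intro mult_mono) auto
  then show ?case by (simp add: norm_mult)
qed

lemma poly_prod_list_linear: "poly (\<Prod>a\<leftarrow>as. [:- a, 1:]) x = (\<Prod>a\<leftarrow>as. x - (a::complex))"
  by (induction as) (auto simp: algebra_simps)

lemma eigen_small:
  fixes X :: "complex^'d::finite^'d"
  shows "\<exists>l w. w \<noteq> 0 \<and> X *v w = l *s w \<and> cmod l ^ CARD('d) \<le> cmod (Determinants.det X)"
proof -
  let ?n = "CARD('d)"
  define M where "M = toJ X"
  have M: "M \<in> carrier_mat ?n ?n" unfolding M_def by (rule toJ_carrier)
  obtain as where cp: "char_poly M = (\<Prod>a\<leftarrow>as. [:- a, 1:])" and len: "length as = ?n"
    using char_poly_factorized[OF M] by blast
  have "as \<noteq> []" using len by auto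
  then obtain a0 where a0: "a0 \<in> set as" "\<forall>a\<in>set as. cmod a0 \<le> cmod a"
  proof -
    let ?m = "Min (cmod ` set as)"
    have "?m \<in> cmod ` set as" using \<open>as \<noteq> []\<close> by (intro Min_in) auto
    then obtain a0 where "a0 \<in> set as" "cmod a0 = ?m" by auto
    moreover have "\<forall>a\<in>set as. ?m \<le> cmod a" by auto
    ultimately show ?thesis using that by auto
  qed
  have "poly (char_poly M) a0 = 0"
    unfolding cp poly_prod_list_linear using a0(1)
    by (induction as) auto
  then have "eigenvalue M a0" using eigenvalue_root_char_poly[OF M] by simp
  then obtain v where ev: "eigenvector M v a0" unfolding eigenvalue_def by auto
  then have v: "v \<in> carrier_vec ?n" "v \<noteq> 0\<^sub>v ?n" "M *\<^sub>v v = a0 \<cdot>\<^sub>v v"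
    unfolding eigenvector_def using M by auto
  have "poly (char_poly M) 0 = Determinant.det (- (char_matrix M 0))"
    by (rule char_poly_matrix[OF M])
  also have "- (char_matrix M 0) = (-1) \<cdot>\<^sub>m M"
    unfolding char_matrix_def using M by (intro eq_matI) auto
  also have "Determinant.det \<dots> = (-1) ^ ?n * Determinant.det M"
    using M by simp
  finally have "cmod (poly (char_poly M) 0) = cmod (Determinant.det M)"
    by (simp add: norm_mult norm_power)
  moreover have "poly (char_poly M) 0 = (\<Prod>a\<leftarrow>as. - a)"
    unfolding cp poly_prod_list_linear by (induction as) auto
  ultimately have dm: "cmod (Determinant.det M) = cmod (\<Prod>a\<leftarrow>as. - a)" by simp
  have bound: "cmod a0 ^ ?n \<le> cmod (Determinants.det X)"
    using prod_list_lower[OF a0(2)] len dm det_toJ[of X] unfolding M_def by simp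
  define w where "w = ((\<chi> i. Matrix.vec_index v (idxi i)) :: complex^'d)"
  have "X *v w = a0 *s w"
  proof (rule Finite_Cartesian_Product.vec_eq_iff[THEN iffD2], rule allI)
    fix i :: 'd
    have "(M *\<^sub>v v) $ idxi i = (\<Sum>k=0..<?n. M $$ (idxi i, k) * v $ k)"
      using M v(1) idxi_lt[of i] by (auto simp: scalar_prod_def Matrix.row_def)
    also have "\<dots> = (\<Sum>k=0..<?n. X $ i $ idx k * w $ idx k)"
      by (rule sum.cong) (auto simp: M_def toJ_def w_def idxi_lt)
    also have "\<dots> = (\<Sum>j\<in>UNIV. X $ i $ j * w $ j)"
      by (rule sum.reindex_bij_betw[OF bij_idx])
    finally have "(X *v w) $ i = (M *\<^sub>v v) $ idxi i"
      by (simp add: matrix_vector_mult_def)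
    also have "\<dots> = a0 * v $ idxi i" using v(3) v(1) idxi_lt[of i] by simp
    finally show "(X *v w) $ i = (a0 *s w) $ i" by (simp add: w_def)
  qed
  moreover have "w \<noteq> 0"
  proof
    assume "w = 0"
    have "v = 0\<^sub>v ?n"
    proof (rule eq_vecI)
      fix k assume "k < dim_vec (0\<^sub>v ?n :: complex Matrix.vec)"
      then have k: "k < ?n" by simp
      have "w $ idx k = 0" using \<open>w = 0\<close> by simp
      then show "v $ k = 0\<^sub>v ?n $ k" using k by (simp add: w_def)
    qed (use v(1) in simp)
    with v(2) show False by simp
  qed
  ultimately show ?thesis using bound by blast
qed




no_notation Matrix.vec_index (infixl \<open>$\<close> 100)

definition Mc :: "real^'n^'m \<Rightarrow> complex^'n^'m" where
  "Mc M = (\<chi> i j. complex_of_real (M $ i $ j))"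

definition Rev :: "complex^'n \<Rightarrow> real^'n" where
  "Rev w = (\<chi> i. Re (w $ i))"

definition Imv :: "complex^'n \<Rightarrow> real^'n" where
  "Imv w = (\<chi> i. Im (w $ i))"

lemma Mc_mult: "Mc (M ** N) = Mc M ** Mc (N::real^'k^'n)"
  by (simp add: Mc_def matrix_matrix_mult_def Finite_Cartesian_Product.vec_eq_iff of_real_sum)

lemma Rev_mult: "Rev (Mc M *v u) = M *v Rev u"
  by (simp add: Mc_def Rev_def matrix_vector_mult_def Finite_Cartesian_Product.vec_eq_iff Re_sum)

lemma Imv_mult: "Imv (Mc M *v u) = M *v Imv u"
  by (simp add: Mc_def Imv_def matrix_vector_mult_def Finite_Cartesian_Product.vec_eq_iff Im_sum)

lemma Mc_smult: "Mc M *v (c *s u) = c *s (Mc M *v u)"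
  by (simp add: matrix_vector_mult_def Finite_Cartesian_Product.vec_eq_iff sum_distrib_left algebra_simps)

lemma Rev_smult: "Rev (c *s w) = Re c *\<^sub>R Rev w - Im c *\<^sub>R Imv w"
  by (simp add: Rev_def Imv_def Finite_Cartesian_Product.vec_eq_iff)

lemma Imv_smult: "Imv (c *s w) = Im c *\<^sub>R Rev w + Re c *\<^sub>R Imv w"
  by (simp add: Rev_def Imv_def Finite_Cartesian_Product.vec_eq_iff)

lemma Rev_Imv_zero: "Rev w = 0 \<Longrightarrow> Imv w = 0 \<Longrightarrow> w = 0"
  by (simp add: Rev_def Imv_def Finite_Cartesian_Product.vec_eq_iff complex_eq_iff)

lemma det_Mc: "Determinants.det (Mc (M::real^'n^'n)) = complex_of_real (Determinants.det M)"
  by (simp add: Determinants.det_def Mc_def of_real_sum of_real_prod)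

lemma cocycle_add: "cocycle f A (a + b) x = cocycle f A a ((f ^^ b) x) ** cocycle f A b x"
  by (induction a) (simp_all add: matrix_mul_assoc funpow_add)

lemma det_cocycle: "Determinants.det (cocycle f A n x) = (\<Prod>j<n. Determinants.det (A ((f ^^ j) x)))"
  by (induction n) (simp_all add: det_mul)

lemma funpow_period: "(f ^^ n) p = p \<Longrightarrow> (f ^^ (m * n)) p = p"
  by (induction m) (simp_all add: funpow_add)

definition mpow :: "real^'n^'n \<Rightarrow> nat \<Rightarrow> real^'n^'n" where
  "mpow B m = ((\<lambda>X. B ** X) ^^ m) (Finite_Cartesian_Product.mat 1)"

lemma mpow_Suc: "mpow B (Suc m) = B ** mpow B m"
  by (simp add: mpow_def)

lemma Mc_one: "Mc (Finite_Cartesian_Product.mat 1) = Finite_Cartesian_Product.mat 1"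
  by (simp add: Mc_def Finite_Cartesian_Product.mat_def Finite_Cartesian_Product.vec_eq_iff)

lemma mpow_eigen: "Mc B *v w = l *s w \<Longrightarrow> Mc (mpow B m) *v w = (l ^ m) *s w"
proof (induction m)
  case 0
  then show ?case by (simp add: mpow_def Mc_one)
next
  case (Suc m)
  then show ?case
    by (simp add: mpow_Suc Mc_mult matrix_vector_mul_assoc[symmetric] Mc_smult)
qed

lemma opnorm_bound: "norm (M *v v) \<le> opnorm M * norm v"
  unfolding opnorm_def
  by (rule onorm) (simp add: linear_conv_bounded_linear matrix_vector_mul_linear)

lemma opnorm_nonneg: "0 \<le> opnorm (M::real^'n^'m)"
  unfolding opnorm_def
  by (rule onorm_pos_le) (simp add: linear_conv_bounded_linear matrix_vector_mul_linear)

lemma cocycle_period: "(f ^^ n) p = p \<Longrightarrow> cocycle f A (m * n) p = mpow (cocycle f A n p) m"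
proof (induction m)
  case 0 then show ?case by (simp add: mpow_def)
next
  case (Suc m)
  have "cocycle f A (Suc m * n) p = cocycle f A (n + m * n) p" by (simp add: add.commute)
  also have "\<dots> = cocycle f A n ((f ^^ (m*n)) p) ** cocycle f A (m * n) p" by (rule cocycle_add)
  also have "\<dots> = cocycle f A n p ** mpow (cocycle f A n p) m"
    using Suc funpow_period[OF Suc.prems] by simp
  finally show ?case by (simp add: mpow_Suc)
qed

lemma eig_real_growth:
  fixes B :: "real^'n^'n"
  assumes ev: "Mc B *v w = l *s w" and w: "w \<noteq> 0" and l: "l \<noteq> 0"
  shows "\<exists>a \<kappa> K. a \<noteq> 0 \<and> \<kappa> > 0 \<and> (\<forall>m. \<kappa> * cmod l ^ m \<le> norm (mpow B m *v a) \<and> norm (mpow B m *v a) \<le> K * cmod l ^ m)"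
proof -
  obtain w' where ev': "Mc B *v w' = l *s w'" and aw: "Rev w' \<noteq> 0"
  proof (cases "Rev w = 0")
    case True
    then have "Imv w \<noteq> 0" using w Rev_Imv_zero by blast
    moreover have e2: "Mc B *v (\<i> *s w) = l *s (\<i> *s w)"
      using ev by (simp add: Mc_smult vector_smult_assoc mult.commute)
    moreover have "Rev (\<i> *s w) = - Imv w" using True by (simp add: Rev_smult)
    ultimately have "Rev (\<i> *s w) \<noteq> 0" by simp
    from that[OF e2 this] show ?thesis .
  next
    case False then show ?thesis using that ev by auto
  qed
  define a where "a = Rev w'"
  define b where "b = Imv w'"
  have pw: "mpow B m *v a = Re (l ^ m) *\<^sub>R a - Im (l ^ m) *\<^sub>R b" for m
  proof -
    have "mpow B m *v a = Rev (Mc (mpow B m) *v w')" by (simp add: Rev_mult a_def)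
    also have "\<dots> = Rev ((l ^ m) *s w')" by (simp add: mpow_eigen[OF ev'])
    finally show ?thesis by (simp add: Rev_smult a_def b_def)
  qed
  have upper: "norm (mpow B m *v a) \<le> (norm a + norm b) * cmod l ^ m" for m
  proof -
    have "norm (mpow B m *v a) \<le> \<bar>Re (l^m)\<bar> * norm a + \<bar>Im (l^m)\<bar> * norm b"
      unfolding pw by (rule order_trans[OF norm_triangle_ineq4]) simp
    also have "\<dots> \<le> cmod (l^m) * norm a + cmod (l^m) * norm b"
      by (intro add_mono mult_right_mono abs_Re_le_cmod abs_Im_le_cmod) auto
    finally show ?thesis by (simp add: norm_power algebra_simps)
  qed
  show ?thesis
  proof (cases "\<forall>u. cmod u = 1 \<longrightarrow> Re u *\<^sub>R a - Im u *\<^sub>R b \<noteq> 0")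
    case True
    define g where "g = (\<lambda>u. norm (Re u *\<^sub>R a - Im u *\<^sub>R b))"
    have cg: "continuous_on (sphere 0 1) g" unfolding g_def by (intro continuous_intros)
    obtain u0 where u0: "u0 \<in> sphere (0::complex) 1" "\<forall>u\<in>sphere 0 1. g u0 \<le> g u"
      using continuous_attains_inf[OF compact_sphere _ cg] by fastforce
    define \<kappa> where "\<kappa> = g u0"
    have kpos: "\<kappa> > 0" using True u0(1) by (auto simp: \<kappa>_def g_def)
    have lower: "\<kappa> * cmod l ^ m \<le> norm (mpow B m *v a)" for m
    proof -
      define z where "z = l ^ m"
      have z0: "z \<noteq> 0" using l by (simp add: z_def)
      define u where "u = z / of_real (cmod z)"
      have "cmod u = 1" using z0 by (simp add: u_def norm_divide)
      then have "\<kappa> \<le> g u" using u0 by (auto simp: \<kappa>_def)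
      have zu: "z = of_real (cmod z) * u" using z0 by (simp add: u_def)
      have "Re z = cmod z * Re u" "Im z = cmod z * Im u"
        by (subst zu, simp)+
      then have "Re z *\<^sub>R a - Im z *\<^sub>R b = cmod z *\<^sub>R (Re u *\<^sub>R a - Im u *\<^sub>R b)"
        by (simp add: scaleR_diff_right)
      then have "norm (mpow B m *v a) = cmod z * g u"
        by (simp add: pw z_def g_def)
      moreover have "cmod z = cmod l ^ m" by (simp add: z_def norm_power)
      ultimately show ?thesis using \<open>\<kappa> \<le> g u\<close>
        by (metis mult.commute mult_right_mono norm_ge_zero zero_le_power)
    qed
    show ?thesis using kpos lower upper aw unfolding a_def by blast
  next
    case False
    then obtain u where u: "cmod u = 1" "Re u *\<^sub>R a = Im u *\<^sub>R b" by auto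
    have iu: "Im u \<noteq> 0"
    proof
      assume "Im u = 0"
      then have "\<bar>Re u\<bar> = 1" using u(1) by (simp add: cmod_def)
      then show False using u(2) aw \<open>Im u = 0\<close> by (auto simp: a_def)
    qed
    define t where "t = Re u / Im u"
    have "t *\<^sub>R a = (1 / Im u) *\<^sub>R (Re u *\<^sub>R a)" by (simp add: t_def)
    also have "\<dots> = b" using u(2) iu by simp
    finally have bt: "b = t *\<^sub>R a" by simp
    have Ba: "B *v a = Re l *\<^sub>R a - Im l *\<^sub>R b"
      using arg_cong[OF ev', of Rev] by (simp add: Rev_mult Rev_smult a_def b_def)
    have Bb: "B *v b = Im l *\<^sub>R a + Re l *\<^sub>R b"
      using arg_cong[OF ev', of Imv] by (simp add: Imv_mult Imv_smult a_def b_def)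
    have Ba': "B *v a = (Re l - Im l * t) *\<^sub>R a"
      using Ba by (simp add: bt scaleR_diff_left)
    have Bb': "B *v b = (Im l + Re l * t) *\<^sub>R a"
      using Bb by (simp add: bt scaleR_add_left)
    have "B *v b = t *\<^sub>R (B *v a)" by (simp add: bt matrix_vector_mult_scaleR)
    also have "\<dots> = (t * (Re l - Im l * t)) *\<^sub>R a" by (simp add: Ba')
    finally have "(Im l + Re l * t) *\<^sub>R a = (t * (Re l - Im l * t)) *\<^sub>R a"
      using Bb' by simp
    then have "Im l + Re l * t = t * (Re l - Im l * t)"
      using aw by (simp add: a_def)
    then have "Im l * (1 + t^2) = 0" by (simp add: algebra_simps power2_eq_square)
    moreover have "1 + t^2 \<noteq> 0" using zero_le_power2[of t] by linarith
    ultimately have iml: "Im l = 0" by simp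
    then have lr: "l = of_real (Re l)" by (simp add: complex_eq_iff)
    have "mpow B m *v a = Re l ^ m *\<^sub>R a" for m
    proof -
      have "l ^ m = of_real (Re l ^ m)" by (subst lr) simp
      then show ?thesis by (simp add: pw)
    qed
    then have "norm (mpow B m *v a) = norm a * cmod l ^ m" for m
      by (subst lr) (simp add: norm_power power_abs)
    moreover have "norm a > 0" using aw by (simp add: a_def)
    ultimately show ?thesis using aw unfolding a_def by (metis order_refl)
  qed
qed

lemma det_nz_inj: "Determinants.det (B::real^'n^'n) \<noteq> 0 \<Longrightarrow> B *v x = 0 \<Longrightarrow> x = 0"
  by (metis invertible_det_nz invertible_def matrix_vector_mul_assoc matrix_vector_mul_lid
      matrix_vector_mult_0_right)

lemma det_zero_ker: "Determinants.det (B::real^'n^'n) = 0 \<Longrightarrow> \<exists>v. v \<noteq> 0 \<and> B *v v = 0"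
  by (metis invertible_det_nz invertible_def matrix_left_invertible_ker matrix_left_right_inverse)

lemma periodic_det_bound:
  fixes f :: "'a \<Rightarrow> 'a" and A :: "'a \<Rightarrow> real^'d^'d"
  assumes exps: "\<forall>L\<in>lyapunov_exponents f A p. L \<ge> ereal c"
    and per: "(f ^^ n) p = p" and n: "n > 0"
  shows "exp (real n * real CARD('d) * c) \<le> \<bar>Determinants.det (cocycle f A n p)\<bar>"
proof -
  define B where "B = cocycle f A n p"
  have split: "cocycle f A (m * n + r) p = cocycle f A r p ** mpow B m" for m r
    using cocycle_add[of f A r "m*n" p] funpow_period[OF per, of m] cocycle_period[OF per, of A m]
    by (simp add: B_def add.commute)
  have detB: "Determinants.det B \<noteq> 0"
  proof
    assume "Determinants.det B = 0"
    then obtain v where v: "v \<noteq> 0" "B *v v = 0" using det_zero_ker by blast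
    have "\<forall>\<^sub>F k in sequentially. ereal_log_rate k (norm (cocycle f A k p *v v)) = - \<infinity>"
    proof (rule eventually_sequentiallyI[of n])
      fix k assume "n \<le> k"
      then have "cocycle f A k p = cocycle f A (k - n) p ** B"
        using cocycle_add[of f A "k - n" n p] per by (simp add: B_def)
      then have "cocycle f A k p *v v = 0"
        using v by (simp add: matrix_vector_mul_assoc[symmetric])
      then show "ereal_log_rate k (norm (cocycle f A k p *v v)) = - \<infinity>"
        by (simp add: ereal_log_rate_def)
    qed
    then have "((\<lambda>k. ereal_log_rate k (norm (cocycle f A k p *v v))) \<longlongrightarrow> - \<infinity>) sequentially"
      by (rule tendsto_eventually)
    then have "- \<infinity> \<in> lyapunov_exponents f A p"
      unfolding lyapunov_exponents_def using v by blast
    then show False using exps by force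
  qed
  show ?thesis
  proof (rule ccontr)
    assume "\<not> ?thesis"
    then have small: "\<bar>Determinants.det B\<bar> < exp (real n * c) ^ CARD('d)"
      by (simp add: B_def exp_of_nat_mult[symmetric] algebra_simps)
    obtain l w where w: "w \<noteq> 0" and ev: "Mc B *v w = l *s w"
      and lb: "cmod l ^ CARD('d) \<le> cmod (Determinants.det (Mc B))"
      using eigen_small[of "Mc B"] by blast
    have "cmod (Determinants.det (Mc B)) = \<bar>Determinants.det B\<bar>" by (simp add: det_Mc)
    then have "cmod l ^ CARD('d) < exp (real n * c) ^ CARD('d)" using lb small by linarith
    then have lsmall: "cmod l < exp (real n * c)"
      by (rule power_less_imp_less_base) simp
    have l0: "l \<noteq> 0"
    proof
      assume "l = 0"
      then have "Mc B *v w = 0" using ev by simp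
      then have "B *v Rev w = 0" "B *v Imv w = 0"
        by (metis Rev_mult Imv_mult Rev_def Imv_def zero_index zero_complex.simps Finite_Cartesian_Product.vec_eq_iff vec_lambda_beta)+
      then have "Rev w = 0" "Imv w = 0" using det_nz_inj[OF detB] by auto
      then show False using w Rev_Imv_zero by blast
    qed
    obtain a \<kappa> K where a: "a \<noteq> 0" and kap: "\<kappa> > 0"
      and gr: "\<And>m. \<kappa> * cmod l ^ m \<le> norm (mpow B m *v a) \<and> norm (mpow B m *v a) \<le> K * cmod l ^ m"
      using eig_real_growth[OF ev w l0] by blast
    have detr: "Determinants.det (cocycle f A r p) \<noteq> 0" if "r < n" for r
    proof -
      have "Determinants.det B = Determinants.det (cocycle f A (n - r) ((f ^^ r) p)) * Determinants.det (cocycle f A r p)"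
        using cocycle_add[of f A "n - r" r p] that by (simp add: B_def det_mul)
      then show ?thesis using detB by auto
    qed
    have "\<forall>r\<in>{..<n}. \<exists>s>0. \<forall>u. s * norm u \<le> norm (cocycle f A r p *v u)"
    proof
      fix r assume "r \<in> {..<n}"
      then have rn: "r < n" by simp
      have "inj ((*v) (cocycle f A r p))"
      proof (rule injI)
        fix x y assume "cocycle f A r p *v x = cocycle f A r p *v y"
        then have "cocycle f A r p *v (x - y) = 0" by (simp add: matrix_vector_mult_diff_distrib)
        then have "x - y = 0" by (rule det_nz_inj[OF detr[OF rn]])
        then show "x = y" by simp
      qed
      then show "\<exists>s>0. \<forall>u. s * norm u \<le> norm (cocycle f A r p *v u)"
        using linear_inj_bounded_below_pos[OF matrix_vector_mul_linear] by metis
    qed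
    then obtain \<sigma> where sig: "\<forall>r\<in>{..<n}. \<sigma> r > 0 \<and> (\<forall>u. \<sigma> r * norm u \<le> norm (cocycle f A r p *v u))"
      by metis
    define s0 where "s0 = Min (\<sigma> ` {..<n})"
    define S0 where "S0 = Max ((\<lambda>r. opnorm (cocycle f A r p)) ` {..<n})"
    have s0in: "s0 \<in> \<sigma> ` {..<n}" unfolding s0_def using n by (intro Min_in) auto
    have s0: "s0 > 0" "\<And>r. r < n \<Longrightarrow> s0 \<le> \<sigma> r"
      using s0in sig by (auto simp: s0_def)
    have S0: "\<And>r. r < n \<Longrightarrow> opnorm (cocycle f A r p) \<le> S0"
      by (auto simp: S0_def)
    define X where "X = (\<lambda>k. cocycle f A k p *v a)"
    define lam where "lam = ln (cmod l)"
    have bounds: "s0 * \<kappa> * cmod l ^ (k div n) \<le> norm (X k) \<and> norm (X k) \<le> S0 * K * cmod l ^ (k div n)" for k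
    proof -
      define m where "m = k div n"
      define r where "r = k mod n"
      have kr: "k = m * n + r" by (simp add: m_def r_def)
      have rn: "r < n" using n by (simp add: r_def)
      have Xk: "X k = cocycle f A r p *v (mpow B m *v a)"
        by (simp add: X_def kr split matrix_vector_mul_assoc[symmetric])
      have "s0 * \<kappa> * cmod l ^ m \<le> \<sigma> r * norm (mpow B m *v a)"
        using gr[of m] s0(2)[OF rn] s0(1) kap
        by (metis mult.assoc mult_mono' less_imp_le mult_nonneg_nonneg norm_ge_zero zero_le_power)
      also have "\<dots> \<le> norm (X k)" using sig rn by (simp add: Xk)
      finally have lo: "s0 * \<kappa> * cmod l ^ m \<le> norm (X k)" .
      have "norm (X k) \<le> opnorm (cocycle f A r p) * norm (mpow B m *v a)"
        unfolding Xk by (rule opnorm_bound)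
      also have "\<dots> \<le> S0 * (K * cmod l ^ m)"
        using gr[of m] S0[OF rn]
        using opnorm_nonneg[of "cocycle f A r p"]
        by (intro mult_mono) auto
      finally show ?thesis using lo by (simp add: m_def mult.assoc)
    qed
    have Xpos: "norm (X k) > 0" for k
      using bounds[of k] s0(1) kap l0 by (smt (verit) mult_pos_pos zero_less_norm_iff zero_less_power)
    define C1 where "C1 = \<bar>ln (s0 * \<kappa>)\<bar> + \<bar>ln (S0 * K)\<bar> + \<bar>lam\<bar>"
    have closeb: "\<bar>ln (norm (X k)) - real k * lam / real n\<bar> \<le> C1" for k
    proof -
      define m where "m = k div n"
      have pl: "cmod l ^ m > 0" using l0 by simp
      have lnp: "ln (cmod l ^ m) = real m * lam" using l0 by (simp add: lam_def ln_realpow)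
      have p1: "s0 * \<kappa> > 0" using s0 kap by simp
      have SKp: "S0 * K * cmod l ^ m > 0" using bounds[of k] Xpos[of k] unfolding m_def by linarith
      then have p2: "S0 * K > 0" using pl by (simp add: zero_less_mult_iff)
      have "ln (s0 * \<kappa> * cmod l ^ m) \<le> ln (norm (X k))"
        using bounds[of k] p1 pl Xpos[of k] unfolding m_def
        by (intro ln_le_cancel_iff[THEN iffD2]) auto
      moreover have "ln (s0 * \<kappa> * cmod l ^ m) = ln (s0 * \<kappa>) + ln (cmod l ^ m)"
        by (rule ln_mult_pos[OF p1 pl])
      ultimately have lo: "ln (s0 * \<kappa>) + real m * lam \<le> ln (norm (X k))"
        using lnp by linarith
      have "ln (norm (X k)) \<le> ln (S0 * K * cmod l ^ m)"
        using bounds[of k] Xpos[of k] SKp unfolding m_def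
        by (intro ln_le_cancel_iff[THEN iffD2]) auto
      moreover have "ln (S0 * K * cmod l ^ m) = ln (S0 * K) + ln (cmod l ^ m)"
        by (rule ln_mult_pos[OF p2 pl])
      ultimately have hi: "ln (norm (X k)) \<le> ln (S0 * K) + real m * lam"
        using lnp by linarith
      have "real k = real m * real n + real (k mod n)"
        unfolding m_def by (metis div_mult_mod_eq of_nat_add of_nat_mult)
      then have "real k * lam / real n = real m * lam + real (k mod n) / real n * lam"
        using n by (simp add: field_simps)
      moreover have "real (k mod n) / real n \<le> 1" using n by simp
      moreover have "0 \<le> real (k mod n) / real n" by simp
      ultimately have "\<bar>real k * lam / real n - real m * lam\<bar> \<le> \<bar>lam\<bar>"
      proof -
        assume e: "real k * lam / real n = real m * lam + real (k mod n) / real n * lam"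
          and q1: "real (k mod n) / real n \<le> 1" and q0: "0 \<le> real (k mod n) / real n"
        have "\<bar>real k * lam / real n - real m * lam\<bar> = real (k mod n) / real n * \<bar>lam\<bar>"
          using e q0 by (simp add: abs_mult)
        also have "\<dots> \<le> 1 * \<bar>lam\<bar>" using q1 by (intro mult_right_mono) auto
        finally show ?thesis by simp
      qed
      then show ?thesis using lo hi unfolding C1_def by linarith
    qed
    have lim0: "(\<lambda>k. ln (norm (X k)) / real k - lam / real n) \<longlonglongrightarrow> 0"
    proof (rule Lim_null_comparison)
      show "\<forall>\<^sub>F k in sequentially. norm (ln (norm (X k)) / real k - lam / real n) \<le> C1 / real k"
      proof (rule eventually_sequentiallyI[of 1])
        fix k :: nat assume "1 \<le> k"
        then have kp: "real k > 0" by simp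
        have "ln (norm (X k)) / real k - lam / real n = (ln (norm (X k)) - real k * lam / real n) / real k"
          using kp by (simp add: field_simps)
        then show "norm (ln (norm (X k)) / real k - lam / real n) \<le> C1 / real k"
          using closeb[of k] kp by (simp add: divide_right_mono)
      qed
      show "(\<lambda>k. C1 / real k) \<longlonglongrightarrow> 0" by (rule lim_const_over_n)
    qed
    then have "(\<lambda>k. ln (norm (X k)) / real k) \<longlonglongrightarrow> lam / real n"
      by (rule LIM_zero_cancel)
    then have "((\<lambda>k. ereal (ln (norm (X k)) / real k)) \<longlongrightarrow> ereal (lam / real n)) sequentially"
      by (rule tendsto_ereal)
    moreover have "ereal_log_rate k (norm (X k)) = ereal (ln (norm (X k)) / real k)" for k
      using Xpos[of k] by (simp add: ereal_log_rate_def)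
    ultimately have "ereal (lam / real n) \<in> lyapunov_exponents f A p"
      unfolding lyapunov_exponents_def X_def using a by auto
    then have "c \<le> lam / real n" using exps by force
    then have "real n * c \<le> lam" using n by (simp add: field_simps)
    then have "exp (real n * c) \<le> cmod l" using l0 by (simp add: lam_def ln_ge_iff)
    then show False using lsmall by simp
  qed
qed




lemma entry_le_opnorm: "\<bar>M $ i $ j\<bar> \<le> opnorm (M::real^'n^'m)"
proof -
  have "M $ i $ j = (M *v axis j 1) $ i"
    by (simp add: matrix_vector_mult_basis column_def)
  also have "\<bar>\<dots>\<bar> \<le> norm (M *v axis j 1)" by (rule component_le_norm_cart)
  also have "\<dots> \<le> opnorm M * norm (axis j (1::real))" by (rule opnorm_bound)
  finally show ?thesis by (simp add: norm_axis_1)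
qed

lemma prod_diff_bound:
  fixes a b :: "'i \<Rightarrow> real"
  assumes "finite S" "R \<ge> 1" "\<And>i. i \<in> S \<Longrightarrow> \<bar>a i\<bar> \<le> R" "\<And>i. i \<in> S \<Longrightarrow> \<bar>b i\<bar> \<le> R"
    "\<And>i. i \<in> S \<Longrightarrow> \<bar>a i - b i\<bar> \<le> \<delta>"
  shows "\<bar>prod a S - prod b S\<bar> \<le> real (card S) * R ^ card S * \<delta> \<and> \<bar>prod b S\<bar> \<le> R ^ card S"
  using assms(1,3-5)
proof (induction S rule: finite_induct)
  case empty then show ?case by simp
next
  case (insert x S)
  have IH: "\<bar>prod a S - prod b S\<bar> \<le> real (card S) * R ^ card S * \<delta>" "\<bar>prod b S\<bar> \<le> R ^ card S"
    using insert by auto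
  have ax: "\<bar>a x\<bar> \<le> R" "\<bar>b x\<bar> \<le> R" "\<bar>a x - b x\<bar> \<le> \<delta>" using insert by auto
  have d0: "\<delta> \<ge> 0" using ax(3) by linarith
  have R0: "R \<ge> 0" "R ^ card S \<ge> 0" using assms(2) by auto
  have Rp: "R ^ card S \<le> R ^ Suc (card S)" using assms(2) by (simp add: power_increasing)
  have "prod a (insert x S) - prod b (insert x S) = a x * (prod a S - prod b S) + (a x - b x) * prod b S"
    using insert by (simp add: algebra_simps)
  also have "\<bar>\<dots>\<bar> \<le> \<bar>a x\<bar> * \<bar>prod a S - prod b S\<bar> + \<bar>a x - b x\<bar> * \<bar>prod b S\<bar>"
    by (metis abs_mult abs_triangle_ineq)
  also have "\<dots> \<le> R * (real (card S) * R ^ card S * \<delta>) + \<delta> * R ^ card S"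
    using IH ax d0 R0 by (intro add_mono mult_mono) auto
  also have "\<dots> \<le> R * (real (card S) * R ^ card S * \<delta>) + \<delta> * R ^ Suc (card S)"
    using Rp d0 R0 by (intro add_mono mult_left_mono) auto
  also have "\<dots> = real (Suc (card S)) * R ^ Suc (card S) * \<delta>"
    by (simp add: algebra_simps)
  finally have 1: "\<bar>prod a (insert x S) - prod b (insert x S)\<bar> \<le> real (Suc (card S)) * R ^ Suc (card S) * \<delta>" .
  have "\<bar>prod b (insert x S)\<bar> = \<bar>b x\<bar> * \<bar>prod b S\<bar>" using insert(1,2) by (simp add: abs_mult)
  also have "\<dots> \<le> R * R ^ card S" using IH ax R0 by (intro mult_mono) auto
  finally have 2: "\<bar>prod b (insert x S)\<bar> \<le> R ^ Suc (card S)" by simp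
  have ci: "card (insert x S) = Suc (card S)" using insert(1,2) by simp
  show ?case unfolding ci using 1 2 by blast
qed

lemma sgn1: "\<bar>(of_int (sign p) :: real)\<bar> = 1"
  by (simp add: sign_def)

lemma det_lipschitz:
  fixes X Y :: "real^'n^'n"
  assumes "R \<ge> 1" "\<And>i j. \<bar>X $ i $ j\<bar> \<le> R" "\<And>i j. \<bar>Y $ i $ j\<bar> \<le> R"
    "\<And>i j. \<bar>X $ i $ j - Y $ i $ j\<bar> \<le> \<delta>"
  shows "\<bar>Determinants.det X - Determinants.det Y\<bar> \<le> real (card {p. p permutes (UNIV::'n set)}) * (real CARD('n) * R ^ CARD('n)) * \<delta>
     \<and> \<bar>Determinants.det Y\<bar> \<le> real (card {p. p permutes (UNIV::'n set)}) * R ^ CARD('n)"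
proof -
  let ?P = "{p. p permutes (UNIV::'n set)}"
  have fP: "finite ?P" by (simp add: finite_permutations)
  have b: "\<bar>(\<Prod>i\<in>UNIV. X $ i $ p i) - (\<Prod>i\<in>UNIV. Y $ i $ p i)\<bar> \<le> real CARD('n) * R ^ CARD('n) * \<delta>
      \<and> \<bar>\<Prod>i\<in>UNIV. Y $ i $ p i\<bar> \<le> R ^ CARD('n)" for p
    using prod_diff_bound[of UNIV R "\<lambda>i. X $ i $ p i" "\<lambda>i. Y $ i $ p i" \<delta>] assms by auto
  have "Determinants.det X - Determinants.det Y = (\<Sum>p\<in>?P. of_int (sign p) * ((\<Prod>i\<in>UNIV. X $ i $ p i) - (\<Prod>i\<in>UNIV. Y $ i $ p i)))"
    unfolding Determinants.det_def sum_subtractf[symmetric] by (simp add: right_diff_distrib)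
  also have "\<bar>\<dots>\<bar> \<le> (\<Sum>p\<in>?P. \<bar>of_int (sign p) * ((\<Prod>i\<in>UNIV. X $ i $ p i) - (\<Prod>i\<in>UNIV. Y $ i $ p i))\<bar>)"
    by (rule sum_abs)
  also have "\<dots> \<le> (\<Sum>p\<in>?P. real CARD('n) * R ^ CARD('n) * \<delta>)"
    by (intro sum_mono) (simp only: abs_mult sgn1 mult_1_left b[THEN conjunct1])
  finally have 1: "\<bar>Determinants.det X - Determinants.det Y\<bar> \<le> real (card ?P) * (real CARD('n) * R ^ CARD('n)) * \<delta>" by simp
  have "\<bar>Determinants.det Y\<bar> \<le> (\<Sum>p\<in>?P. \<bar>of_int (sign p) * (\<Prod>i\<in>UNIV. Y $ i $ p i)\<bar>)"
    unfolding Determinants.det_def by (rule sum_abs)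
  also have "\<dots> \<le> (\<Sum>p\<in>?P. R ^ CARD('n))"
    by (intro sum_mono) (simp only: abs_mult sgn1 mult_1_left b[THEN conjunct2])
  finally show ?thesis using 1 by simp
qed

lemma ln_lipschitz:
  fixes a b e :: real
  assumes "a \<ge> e" "b \<ge> e" "e > 0"
  shows "\<bar>ln a - ln b\<bar> \<le> \<bar>a - b\<bar> / e"
proof -
  have key: "ln x - ln y \<le> (x - y) / e" if "x \<ge> y" "y \<ge> e" for x y
  proof -
    have yp: "y > 0" using less_le_trans[OF assms(3) that(2)] .
    have "ln x - ln y = ln (x / y)" using yp that by (simp add: ln_div)
    also have "\<dots> \<le> x / y - 1" using yp that by (intro ln_le_minus_one) simp
    also have "\<dots> = (x - y) / y" using yp by (simp add: field_simps)
    also have "\<dots> \<le> (x - y) / e" using that assms(3) by (intro divide_left_mono) auto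
    finally show ?thesis .
  qed
  show ?thesis
  proof (cases "a \<ge> b")
    case True
    then have "ln b \<le> ln a" using assms by simp
    then show ?thesis using key[OF True assms(2)] True by simp
  next
    case False
    then have "ln a \<le> ln b" using assms by simp
    then show ?thesis using key[of a b] False assms by simp
  qed
qed

lemma sum_split_add:
  fixes M k :: nat and g :: "nat \<Rightarrow> real"
  shows "(\<Sum>j<M + k. g j) = (\<Sum>j<M. g j) + (\<Sum>j<k. (g (M + j) :: real))"
proof (induction k)
  case 0 then show ?case by simp
next
  case (Suc k)
  have "(\<Sum>j<M + Suc k. g j) = (\<Sum>j<M + k. g j) + g (M + k)"
    by (simp only: add_Suc_right sum.lessThan_Suc)
  also have "\<dots> = (\<Sum>j<M. g j) + ((\<Sum>j<k. g (M + j)) + g (M + k))"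
    by (simp only: Suc.IH add.assoc)
  also have "(\<Sum>j<k. g (M + j)) + g (M + k) = (\<Sum>j<Suc k. g (M + j))"
    by (simp only: sum.lessThan_Suc)
  finally show ?case .
qed

lemma sum_split_at:
  fixes M N :: nat and g :: "nat \<Rightarrow> real"
  assumes "M \<le> N"
  shows "(\<Sum>j<N. g j) = (\<Sum>j<M. g j) + (\<Sum>j<N - M. (g (M + j) :: real))"
  using sum_split_add[where M=M and k="N - M" and g=g] assms by simp

lemma geom_min_bound:
  fixes x :: real
  assumes "0 < x" "x < 1"
  shows "(\<Sum>j<n. x ^ min j (n - j)) \<le> 2 / (1 - x)"
proof -
  have g: "(\<Sum>j<n. x ^ j) \<le> 1 / (1 - x)" for n
  proof -
    have "(\<Sum>j<n. x ^ j) = (1 - x ^ n) / (1 - x)" using assms by (simp add: sum_gp_strict)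
    also have "\<dots> \<le> 1 / (1 - x)" using assms by (intro divide_right_mono) auto
    finally show ?thesis .
  qed
  have pt: "x ^ min j (n - j) \<le> x ^ j + x ^ (n - j)" for j
  proof (cases "j \<le> n - j")
    case True
    then have "min j (n - j) = j" by simp
    moreover have "0 \<le> x ^ (n - j)" using assms by simp
    ultimately show ?thesis by simp
  next
    case False
    then have "min j (n - j) = n - j" by simp
    moreover have "0 \<le> x ^ j" using assms by simp
    ultimately show ?thesis by simp
  qed
  have A: "(\<Sum>j<n. x ^ min j (n - j)) \<le> (\<Sum>j<n. x ^ j + x ^ (n - j))"
    by (intro sum_mono pt)
  have nj: "n - Suc j + 1 = n - j" if "j \<in> {..<n}" for j using that by simp
  have B: "(\<Sum>j<n. x ^ (n - j)) = (\<Sum>j<n. x ^ (n - Suc j + 1))"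
    by (intro sum.cong refl) (simp only: nj)
  have C: "(\<Sum>j<n. x ^ (n - Suc j + 1)) = (\<Sum>j<n. x ^ (j + 1))"
    by (rule sum.nat_diff_reindex[where g = "\<lambda>j. x ^ (j + 1)"])
  have D: "(\<Sum>j<n. x ^ (j + 1)) = x * (\<Sum>j<n. x ^ j)"
    unfolding sum_distrib_left by (intro sum.cong refl) (simp add: power_Suc)
  have E: "x * (\<Sum>j<n. x ^ j) \<le> 1 * (1 / (1 - x))"
    using g[of n] assms by (intro mult_mono) (auto simp: sum_nonneg)
  have G: "(\<Sum>j<n. x ^ j + x ^ (n - j)) = (\<Sum>j<n. x ^ j) + (\<Sum>j<n. x ^ (n - j))"
    by (rule sum.distrib)
  have F: "(\<Sum>j<n. x ^ (n - j)) = x * (\<Sum>j<n. x ^ j)" unfolding B C D ..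
  have H: "(\<Sum>j<n. x ^ min j (n - j)) \<le> (\<Sum>j<n. x ^ j) + x * (\<Sum>j<n. x ^ j)"
    using A unfolding G F .
  have I: "(\<Sum>j<n. x ^ j) + x * (\<Sum>j<n. x ^ j) \<le> 1 / (1 - x) + 1 * (1 / (1 - x))"
    by (rule add_mono[OF g E])
  have J: "1 / (1 - x) + 1 * (1 / (1 - x)) = 2 / (1 - x)"
    by (simp add: add_divide_distrib[symmetric])
  show ?thesis using order_trans[OF H I] unfolding J .
qed




lemma decomp:
  fixes f :: "'a::metric_space \<Rightarrow> 'a" and \<phi> :: "'a \<Rightarrow> real"
  assumes fin: "finite F"
    and seg: "\<And>w n. dist ((f ^^ n) w) w < eps \<Longrightarrow> (\<Sum>j<n. \<phi> ((f ^^ j) w)) \<ge> real n * c0 - E0"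
    and lo: "\<And>x. \<phi> x \<ge> lo"
    and G0: "G \<ge> 0" and G1: "G \<ge> E0 + c0 - lo"
  shows "S \<subseteq> F \<Longrightarrow> card S \<le> k \<Longrightarrow> (\<forall>j<N. (f ^^ j) z \<in> (\<Union>c\<in>S. ball c (eps/2)))
    \<Longrightarrow> (\<Sum>j<N. \<phi> ((f ^^ j) z)) \<ge> real N * c0 - real k * G"
proof (induction k arbitrary: S z N)
  case 0
  then have "S = {}" using fin finite_subset by fastforce
  then have "N = 0" using 0(3) by (cases N) auto
  then show ?case by simp
next
  case (Suc k)
  show ?case
  proof (cases N)
    case 0 then show ?thesis using G0 by simp
  next
    case (Suc N0)
    then have Np: "0 < N" by simp
    then obtain c where c: "c \<in> S" "z \<in> ball c (eps/2)" using Suc.prems(3) by fastforce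
    define T where "T = {j. j < N \<and> (f ^^ j) z \<in> ball c (eps/2)}"
    have fT: "finite T" unfolding T_def by simp
    have "0 \<in> T" using c Np by (simp add: T_def)
    define t where "t = Max T"
    have tT: "t \<in> T" unfolding t_def using fT \<open>0 \<in> T\<close> by (intro Max_in) auto
    have tmax: "j \<in> T \<Longrightarrow> j \<le> t" for j unfolding t_def using fT by simp
    have tN: "t < N" using tT by (simp add: T_def)
    have "dist ((f ^^ t) z) z < eps"
    proof -
      have "dist c ((f ^^ t) z) < eps/2" "dist c z < eps/2" using tT c by (auto simp: T_def)
      then show ?thesis by (metis dist_commute dist_triangle_half_l)
    qed
    then have s1: "(\<Sum>j<t. \<phi> ((f ^^ j) z)) \<ge> real t * c0 - E0" by (rule seg)
    define z' where "z' = (f ^^ Suc t) z"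
    define N' where "N' = N - Suc t"
    have shift: "(f ^^ j) z' = (f ^^ (Suc t + j)) z" for j
      by (simp only: z'_def add.commute[of "Suc t" j] funpow_add o_apply)
    have "\<forall>j<N'. (f ^^ j) z' \<in> (\<Union>c'\<in>S - {c}. ball c' (eps/2))"
    proof (intro allI impI)
      fix j assume j: "j < N'"
      then have jN: "Suc t + j < N" by (simp add: N'_def)
      then have "(f ^^ (Suc t + j)) z \<in> (\<Union>c\<in>S. ball c (eps/2))" using Suc.prems(3) by blast
      moreover have "(f ^^ (Suc t + j)) z \<notin> ball c (eps/2)"
      proof
        assume "(f ^^ (Suc t + j)) z \<in> ball c (eps/2)"
        then have "Suc t + j \<in> T" using jN by (simp add: T_def)
        then show False using tmax by fastforce
      qed
      ultimately show "(f ^^ j) z' \<in> (\<Union>c'\<in>S - {c}. ball c' (eps/2))"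
        by (auto simp: shift)
    qed
    moreover have "S - {c} \<subseteq> F" using Suc.prems(1) by auto
    moreover have "card (S - {c}) \<le> k"
      using Suc.prems(1,2) c(1) fin finite_subset[OF Suc.prems(1) fin] by (simp add: card_Diff_singleton)
    ultimately have s2: "(\<Sum>j<N'. \<phi> ((f ^^ j) z')) \<ge> real N' * c0 - real k * G"
      using Suc.IH by blast
    have "(\<Sum>j<N. \<phi> ((f ^^ j) z)) = (\<Sum>j<Suc t. \<phi> ((f ^^ j) z)) + (\<Sum>j<N - Suc t. \<phi> ((f ^^ (Suc t + j)) z))"
      by (rule sum_split_at) (use tN in simp)
    also have "(\<Sum>j<Suc t. \<phi> ((f ^^ j) z)) = (\<Sum>j<t. \<phi> ((f ^^ j) z)) + \<phi> ((f ^^ t) z)"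
      by simp
    also have "(\<Sum>j<N - Suc t. \<phi> ((f ^^ (Suc t + j)) z)) = (\<Sum>j<N'. \<phi> ((f ^^ j) z'))"
      by (simp add: shift N'_def)
    finally have eq: "(\<Sum>j<N. \<phi> ((f ^^ j) z)) = (\<Sum>j<t. \<phi> ((f ^^ j) z)) + \<phi> ((f ^^ t) z) + (\<Sum>j<N'. \<phi> ((f ^^ j) z'))" .
    have Nr: "real N = real t + 1 + real N'" using tN by (simp add: N'_def)
    have "real N * c0 - real (Suc k) * G \<le> (real t * c0 - E0) + lo + (real N' * c0 - real k * G)"
      using G1 Nr by (simp add: algebra_simps)
    also have "\<dots> \<le> (\<Sum>j<N. \<phi> ((f ^^ j) z))"
      unfolding eq using s1 s2 lo[of "(f ^^ t) z"] by linarith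
    finally show ?thesis .
  qed
qed




lemma holder_cont:
  fixes g :: "'a::metric_space \<Rightarrow> real"
  assumes h: "\<And>x y. \<bar>g x - g y\<bar> \<le> K * dist x y powr \<alpha>" and a: "\<alpha> > 0"
  shows "continuous_on UNIV g"
proof -
  have "isCont g x" for x
  proof -
    have lim: "((\<lambda>y. K * dist y x powr \<alpha>) \<longlongrightarrow> K * 0) (at x)"
    proof (intro tendsto_mult tendsto_const tendsto_zero_powrI)
      show "((\<lambda>y. dist y x) \<longlongrightarrow> 0) (at x)"
        using tendsto_dist[OF tendsto_ident_at tendsto_const, of x x "UNIV"] by simp
    qed (use a in auto)
    have "((\<lambda>y. g y - g x) \<longlongrightarrow> 0) (at x)"
      by (rule Lim_null_comparison[OF _ lim[simplified]]) (simp add: h)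
    then show ?thesis unfolding isCont_def by (rule LIM_zero_cancel)
  qed
  then show ?thesis by (simp add: continuous_at_imp_continuous_on)
qed

lemma inv_integral:
  fixes h :: "'a \<Rightarrow> real"
  assumes inv: "invariant_measure f \<mu>" and h: "h \<in> borel_measurable \<mu>"
  shows "integral\<^sup>L \<mu> (\<lambda>x. h (f x)) = integral\<^sup>L \<mu> h"
proof -
  have fm: "f \<in> measurable \<mu> \<mu>" using inv by (simp add: invariant_measure_def)
  have "distr \<mu> \<mu> f = \<mu>"
  proof (rule measure_eqI)
    show "sets (distr \<mu> \<mu> f) = sets \<mu>" by simp
    fix B assume "B \<in> sets (distr \<mu> \<mu> f)"
    then have B: "B \<in> sets \<mu>" by simp
    show "emeasure (distr \<mu> \<mu> f) B = emeasure \<mu> B"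
      using emeasure_distr[OF fm B] inv B by (simp add: invariant_measure_def)
  qed
  then have "integral\<^sup>L \<mu> h = integral\<^sup>L (distr \<mu> \<mu> f) h" by simp
  also have "\<dots> = integral\<^sup>L \<mu> (\<lambda>x. h (f x))" by (rule integral_distr[OF fm h])
  finally show ?thesis by simp
qed

lemma funpow_measurable:
  assumes "f \<in> measurable M M"
  shows "(f ^^ j) \<in> measurable M M"
proof (induction j)
  case 0 then show ?case by simp
next
  case (Suc j)
  then show ?case using measurable_comp[OF Suc assms] by (simp add: comp_def funpow_Suc_right)
qed

lemma inv_integral_pow:
  fixes h :: "'a \<Rightarrow> real"
  assumes inv: "invariant_measure f \<mu>" and h: "h \<in> borel_measurable \<mu>"
  shows "integral\<^sup>L \<mu> (\<lambda>x. h ((f ^^ j) x)) = integral\<^sup>L \<mu> h"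
proof (induction j)
  case 0 then show ?case by simp
next
  case (Suc j)
  have fm: "f \<in> measurable \<mu> \<mu>" using inv by (simp add: invariant_measure_def)
  have m: "(\<lambda>x. h ((f ^^ j) x)) \<in> borel_measurable \<mu>"
    using measurable_comp[OF funpow_measurable[OF fm] h] by (simp add: comp_def)
  have "integral\<^sup>L \<mu> (\<lambda>x. h ((f ^^ Suc j) x)) = integral\<^sup>L \<mu> (\<lambda>x. h ((f ^^ j) (f x)))"
    by (simp only: funpow_Suc_right o_apply)
  also have "\<dots> = integral\<^sup>L \<mu> (\<lambda>x. h ((f ^^ j) x))" by (rule inv_integral[OF inv m])
  finally show ?case using Suc by simp
qed




lemma main_ae:
  fixes f :: "'a::metric_space \<Rightarrow> 'a" and A :: "'a \<Rightarrow> real^'d^'d"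
    and \<alpha> c :: real and \<mu> :: "'a measure"
  assumes cpt: "compact (UNIV :: 'a set)" and clos: "anosov_closing f"
    and ap: "\<alpha> > 0" and hol: "holder \<alpha> A"
    and lyap: "\<forall>p. periodic_point f p \<longrightarrow> (\<forall>L\<in>lyapunov_exponents f A p. L \<ge> ereal c)"
    and ps: "prob_space \<mu>" and sb: "sets \<mu> = sets borel" and inv: "invariant_measure f \<mu>"
  shows "AE x in \<mu>. invertible (A x)"
proof -
  interpret prob_space \<mu> by (rule ps)
  have sp: "space \<mu> = UNIV" using sets_eq_imp_space_eq[OF sb] by simp
  obtain C2 where C2: "C2 > 0" "\<And>x y. opnorm (A x - A y) \<le> C2 * dist x y powr \<alpha>"
    using hol unfolding holder_def by blast
  obtain C1 eps0 \<theta> where cl: "C1 > 0" "eps0 > 0" "\<theta> > 0"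
    and close: "\<And>z n. dist ((f ^^ n) z) z < eps0 \<Longrightarrow> (\<exists>p. (f ^^ n) p = p \<and>
           (\<forall>j\<le>n. dist ((f ^^ j) z) ((f ^^ j) p)
                    \<le> C1 * exp (- \<theta> * real (min j (n - j))) * dist ((f ^^ n) z) z))"
    using clos unfolding anosov_closing_def by blast
  define x0 :: 'a where "x0 = undefined"
  obtain \<Delta> where \<Delta>: "\<And>y. dist x0 y \<le> \<Delta>"
    using compact_imp_bounded[OF cpt] unfolding bounded_any_center[of _ x0] by blast
  define R where "R = 1 + (\<Sum>i\<in>UNIV. \<Sum>j\<in>UNIV. \<bar>A x0 $ i $ j\<bar>) + C2 * \<Delta> powr \<alpha>"
  have R1: "R \<ge> 1" unfolding R_def using C2(1) by (simp add: sum_nonneg)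
  have Rb: "\<bar>A x $ i $ j\<bar> \<le> R" for x i j
  proof -
    have e1: "\<bar>A x0 $ i $ j\<bar> \<le> (\<Sum>i\<in>UNIV. \<Sum>j\<in>UNIV. \<bar>A x0 $ i $ j\<bar>)"
    proof -
      have "\<bar>A x0 $ i $ j\<bar> \<le> (\<Sum>j\<in>UNIV. \<bar>A x0 $ i $ j\<bar>)"
        by (rule member_le_sum) auto
      also have "\<dots> \<le> (\<Sum>i\<in>UNIV. \<Sum>j\<in>UNIV. \<bar>A x0 $ i $ j\<bar>)"
        by (rule member_le_sum[where f = "\<lambda>i. \<Sum>j\<in>UNIV. \<bar>A x0 $ i $ j\<bar>"]) (auto simp: sum_nonneg)
      finally show ?thesis .
    qed
    have "\<bar>(A x - A x0) $ i $ j\<bar> \<le> opnorm (A x - A x0)" by (rule entry_le_opnorm)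
    also have "\<dots> \<le> C2 * dist x x0 powr \<alpha>" by (rule C2(2))
    also have "\<dots> \<le> C2 * \<Delta> powr \<alpha>"
      using \<Delta>[of x] C2(1) ap by (intro mult_left_mono powr_mono2) (auto simp: dist_commute)
    finally have e2: "\<bar>A x $ i $ j - A x0 $ i $ j\<bar> \<le> C2 * \<Delta> powr \<alpha>" by simp
    show ?thesis using e1 e2 unfolding R_def by linarith
  qed
  define NP where "NP = real (card {p. p permutes (UNIV::'d set)})"
  define Kd where "Kd = NP * (real CARD('d) * R ^ CARD('d))"
  define D where "D = (\<lambda>x. \<bar>Determinants.det (A x)\<bar>)"
  define Dm where "Dm = NP * R ^ CARD('d)"
  have Kd0: "Kd \<ge> 0" using R1 by (simp add: Kd_def NP_def)
  have Dh: "\<bar>D x - D y\<bar> \<le> (Kd * C2) * dist x y powr \<alpha>" for x y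
  proof -
    have ent: "\<bar>A x $ i $ j - A y $ i $ j\<bar> \<le> C2 * dist x y powr \<alpha>" for i j
      using entry_le_opnorm[of "A x - A y" i j] C2(2)[of x y] by simp
    have "\<bar>Determinants.det (A x) - Determinants.det (A y)\<bar> \<le> Kd * (C2 * dist x y powr \<alpha>)"
      using det_lipschitz[OF R1 Rb Rb ent] unfolding Kd_def NP_def by blast
    moreover have "\<bar>D x - D y\<bar> \<le> \<bar>Determinants.det (A x) - Determinants.det (A y)\<bar>" unfolding D_def by simp
    ultimately show ?thesis by (simp add: mult.assoc)
  qed
  have Dle: "D x \<le> Dm" for x
    using det_lipschitz[OF R1 Rb Rb, of x x 0] unfolding D_def Dm_def NP_def by simp
  have D0: "D x \<ge> 0" for x by (simp add: D_def)
  have Dc: "continuous_on UNIV D" by (rule holder_cont[OF Dh ap])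
  define Z where "Z = {x. D x = 0}"
  have Zs: "Z \<in> sets \<mu>"
    unfolding Z_def sb by (intro borel_closed closed_Collect_eq Dc continuous_on_const)
  have Zeq: "{x \<in> space \<mu>. \<not> invertible (A x)} = Z"
    by (auto simp: Z_def D_def sp invertible_det_nz)
  show ?thesis
  proof (rule ccontr)
    assume nAE: "\<not> ?thesis"
    then have "emeasure \<mu> Z \<noteq> 0" using AE_iff_measurable[OF Zs Zeq] by simp
    then have zpos: "measure \<mu> Z > 0"
      using emeasure_eq_measure[of Z] measure_nonneg[of \<mu> Z] by (auto simp: less_le)
    define \<zeta> where "\<zeta> = measure \<mu> Z"
    define U where "U = ln (max Dm 1)"
    have U0: "U \<ge> 0" by (simp add: U_def)
    define d where "d = real CARD('d)"
    define a where "a = U + (d * c - 3 - U) / \<zeta>"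
    define \<epsilon> where "\<epsilon> = min 1 (exp a)"
    have ep: "\<epsilon> > 0" "\<epsilon> \<le> 1" "ln \<epsilon> \<le> a" by (auto simp: \<epsilon>_def min_def)
    define \<phi> where "\<phi> = (\<lambda>x. ln (max (D x) \<epsilon>))"
    have \<phi>lo: "\<phi> x \<ge> ln \<epsilon>" for x using ep by (simp add: \<phi>_def)
    have \<phi>hi: "\<phi> x \<le> U" for x
      unfolding \<phi>_def U_def using ep Dle[of x] by (subst ln_le_cancel_iff) auto
    have \<phi>Z: "x \<in> Z \<Longrightarrow> \<phi> x = ln \<epsilon>" for x using ep by (simp add: \<phi>_def Z_def)
    define K\<phi> where "K\<phi> = Kd * C2 / \<epsilon>"
    have K\<phi>0: "K\<phi> \<ge> 0" using Kd0 C2(1) ep by (simp add: K\<phi>_def)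
    have \<phi>h: "\<bar>\<phi> x - \<phi> y\<bar> \<le> K\<phi> * dist x y powr \<alpha>" for x y
    proof -
      have "\<bar>\<phi> x - \<phi> y\<bar> \<le> \<bar>max (D x) \<epsilon> - max (D y) \<epsilon>\<bar> / \<epsilon>"
        unfolding \<phi>_def by (rule ln_lipschitz) (use ep in auto)
      also have "\<dots> \<le> \<bar>D x - D y\<bar> / \<epsilon>"
        using ep by (intro divide_right_mono) (auto simp: max_def)
      also have "\<dots> \<le> (Kd * C2) * dist x y powr \<alpha> / \<epsilon>"
        using ep Dh[of x y] by (intro divide_right_mono) auto
      finally show ?thesis by (simp add: K\<phi>_def)
    qed
    have \<phi>c: "continuous_on UNIV \<phi>" by (rule holder_cont[OF \<phi>h ap])
    have \<phi>per: "(\<Sum>j<n. \<phi> ((f ^^ j) p)) \<ge> real n * (d * c)" if per: "(f ^^ n) p = p" and np: "n > 0" for p n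
    proof -
      have "periodic_point f p" using per np unfolding periodic_point_def by blast
      then have ex: "\<forall>L\<in>lyapunov_exponents f A p. L \<ge> ereal c" using lyap by blast
      have "exp (real n * d * c) \<le> \<bar>Determinants.det (cocycle f A n p)\<bar>"
        unfolding d_def by (rule periodic_det_bound[OF ex per np])
      also have "\<bar>Determinants.det (cocycle f A n p)\<bar> = (\<Prod>j<n. D ((f ^^ j) p))"
        by (simp add: det_cocycle D_def abs_prod)
      finally have pe: "exp (real n * d * c) \<le> (\<Prod>j<n. D ((f ^^ j) p))" .
      then have "(\<Prod>j<n. D ((f ^^ j) p)) \<noteq> 0" by (metis exp_gt_zero not_le order_less_le)
      then have Dnz: "\<And>j. j \<in> {..<n} \<Longrightarrow> D ((f ^^ j) p) \<noteq> 0" by auto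
      have "real n * d * c = ln (exp (real n * d * c))" by simp
      also have "\<dots> \<le> ln (\<Prod>j<n. D ((f ^^ j) p))"
        using pe by (subst ln_le_cancel_iff) (auto intro: less_le_trans[OF exp_gt_zero])
      also have "\<dots> = (\<Sum>j<n. ln (D ((f ^^ j) p)))" by (rule ln_prod) (use Dnz in auto)
      also have "\<dots> \<le> (\<Sum>j<n. \<phi> ((f ^^ j) p))"
      proof (rule sum_mono)
        fix j assume "j \<in> {..<n}"
        then have "D ((f ^^ j) p) > 0" using Dnz D0 by (simp add: less_le)
        then show "ln (D ((f ^^ j) p)) \<le> \<phi> ((f ^^ j) p)" unfolding \<phi>_def by simp
      qed
      finally show ?thesis by (simp add: mult.assoc)
    qed
    define q where "q = exp (- \<theta> * \<alpha>)"
    have q: "0 < q" "q < 1" using cl(3) ap by (auto simp: q_def)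
    define E0 where "E0 = K\<phi> * (C1 * eps0) powr \<alpha> * (2 / (1 - q))"
    have E00: "E0 \<ge> 0" using K\<phi>0 q unfolding E0_def by simp
    have seg: "(\<Sum>j<n. \<phi> ((f ^^ j) w)) \<ge> real n * (d * c) - E0"
      if dw: "dist ((f ^^ n) w) w < eps0" for w n
    proof (cases "n = 0")
      case True then show ?thesis using E00 by simp
    next
      case False
      then have np: "n > 0" by simp
      obtain p where per: "(f ^^ n) p = p"
        and pc: "\<forall>j\<le>n. dist ((f ^^ j) w) ((f ^^ j) p) \<le> C1 * exp (- \<theta> * real (min j (n - j))) * dist ((f ^^ n) w) w"
        using close[OF dw] by blast
      have dj: "\<bar>\<phi> ((f ^^ j) w) - \<phi> ((f ^^ j) p)\<bar> \<le> K\<phi> * (C1 * eps0) powr \<alpha> * q ^ min j (n - j)"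
        if j: "j < n" for j
      proof -
        define m where "m = min j (n - j)"
        have "dist ((f ^^ j) w) ((f ^^ j) p) \<le> C1 * exp (- \<theta> * real m) * dist ((f ^^ n) w) w"
          using pc j by (simp add: m_def)
        also have "\<dots> \<le> C1 * exp (- \<theta> * real m) * eps0"
          using dw cl(1) by (intro mult_left_mono) auto
        finally have dle: "dist ((f ^^ j) w) ((f ^^ j) p) \<le> (C1 * eps0) * exp (- \<theta> * real m)"
          by (simp add: algebra_simps)
        have "dist ((f ^^ j) w) ((f ^^ j) p) powr \<alpha> \<le> ((C1 * eps0) * exp (- \<theta> * real m)) powr \<alpha>"
          using dle ap by (intro powr_mono2) auto
        also have "\<dots> = (C1 * eps0) powr \<alpha> * exp (- \<theta> * real m) powr \<alpha>"
          using cl by (simp add: powr_mult)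
        also have "exp (- \<theta> * real m) powr \<alpha> = q ^ m"
          unfolding q_def exp_powr_real exp_of_nat_mult[symmetric] by (simp add: algebra_simps)
        finally have "dist ((f ^^ j) w) ((f ^^ j) p) powr \<alpha> \<le> (C1 * eps0) powr \<alpha> * q ^ m" .
        then have "K\<phi> * dist ((f ^^ j) w) ((f ^^ j) p) powr \<alpha> \<le> K\<phi> * ((C1 * eps0) powr \<alpha> * q ^ m)"
          using K\<phi>0 by (rule mult_left_mono)
        then show ?thesis using \<phi>h[of "(f ^^ j) w" "(f ^^ j) p"] by (simp add: m_def mult.assoc)
      qed
      have "(\<Sum>j<n. \<bar>\<phi> ((f ^^ j) w) - \<phi> ((f ^^ j) p)\<bar>) \<le> (\<Sum>j<n. K\<phi> * (C1 * eps0) powr \<alpha> * q ^ min j (n - j))"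
        by (rule sum_mono) (use dj in auto)
      also have "\<dots> = K\<phi> * (C1 * eps0) powr \<alpha> * (\<Sum>j<n. q ^ min j (n - j))"
        by (simp add: sum_distrib_left)
      also have "\<dots> \<le> K\<phi> * (C1 * eps0) powr \<alpha> * (2 / (1 - q))"
        using geom_min_bound[OF q, of n] K\<phi>0 by (intro mult_left_mono) auto
      finally have sd: "(\<Sum>j<n. \<bar>\<phi> ((f ^^ j) w) - \<phi> ((f ^^ j) p)\<bar>) \<le> E0" unfolding E0_def .
      have "(\<Sum>j<n. \<phi> ((f ^^ j) p)) - (\<Sum>j<n. \<bar>\<phi> ((f ^^ j) w) - \<phi> ((f ^^ j) p)\<bar>) \<le> (\<Sum>j<n. \<phi> ((f ^^ j) w))"
        unfolding sum_subtractf[symmetric] by (rule sum_mono) linarith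
      then show ?thesis using \<phi>per[OF per np] sd by linarith
    qed
    have cov: "UNIV \<subseteq> (\<Union>c\<in>(UNIV::'a set). ball c (eps0/2))"
    proof -
      have "\<And>x::'a. x \<in> ball x (eps0/2)" using cl(2) by simp
      then show ?thesis by blast
    qed
    have "\<exists>F::'a set. finite F \<and> UNIV \<subseteq> (\<Union>c\<in>F. ball c (eps0/2))"
      by (rule compactE_image[OF cpt _ cov]) (simp, blast)
    then obtain F :: "'a set" where F: "finite F" "UNIV \<subseteq> (\<Union>c\<in>F. ball c (eps0/2))" by blast
    define G where "G = E0 + \<bar>d * c\<bar> + \<bar>ln \<epsilon>\<bar>"
    have G0: "G \<ge> 0" using E00 by (simp add: G_def)
    have G1: "G \<ge> E0 + d * c - ln \<epsilon>" by (simp add: G_def)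
    have cv: "\<forall>j<N. (f ^^ j) z \<in> (\<Union>c\<in>F. ball c (eps0 / 2))" for N z using F(2) by blast
    have lowb: "(\<Sum>j<N. \<phi> ((f ^^ j) z)) \<ge> real N * (d * c) - real (card F) * G" for z N
      by (rule decomp[OF F(1) seg \<phi>lo G0 G1 subset_refl le_refl cv])
    have \<phi>m: "\<phi> \<in> borel_measurable \<mu>"
      using borel_measurable_continuous_onI[OF \<phi>c] measurable_cong_sets[OF sb refl] by blast
    have fm: "f \<in> measurable \<mu> \<mu>" using inv by (simp add: invariant_measure_def)
    have \<phi>jm: "(\<lambda>x. \<phi> ((f ^^ j) x)) \<in> borel_measurable \<mu>" for j
      using measurable_comp[OF funpow_measurable[OF fm] \<phi>m] by (simp add: comp_def)
    have \<phi>b: "norm (\<phi> x) \<le> \<bar>ln \<epsilon>\<bar> + U" for x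
      using \<phi>lo[of x] \<phi>hi[of x] U0 by auto
    have \<phi>ji: "integrable \<mu> (\<lambda>x. \<phi> ((f ^^ j) x))" for j
      by (rule integrable_const_bound[where B = "\<bar>ln \<epsilon>\<bar> + U"]) (use \<phi>b \<phi>jm in auto)
    have \<phi>i: "integrable \<mu> \<phi>" using \<phi>ji[of 0] by simp
    define N where "N = nat \<lceil>real (card F) * G\<rceil> + 1"
    have NG: "real N > real (card F) * G" unfolding N_def by linarith
    have sumi: "integral\<^sup>L \<mu> (\<lambda>x. \<Sum>j<N. \<phi> ((f ^^ j) x)) = real N * integral\<^sup>L \<mu> \<phi>"
    proof -
      have "integral\<^sup>L \<mu> (\<lambda>x. \<Sum>j<N. \<phi> ((f ^^ j) x)) = (\<Sum>j<N. integral\<^sup>L \<mu> (\<lambda>x. \<phi> ((f ^^ j) x)))"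
        using Bochner_Integration.integral_sum[where I="{..<N}" and M=\<mu> and f="\<lambda>j x. \<phi> ((f ^^ j) x)"] \<phi>ji by simp
      also have "\<dots> = (\<Sum>j<N. integral\<^sup>L \<mu> \<phi>)"
        by (intro sum.cong refl inv_integral_pow[OF inv \<phi>m])
      finally show ?thesis by simp
    qed
    have lowi: "real N * (d * c) - real (card F) * G \<le> integral\<^sup>L \<mu> (\<lambda>x. \<Sum>j<N. \<phi> ((f ^^ j) x))"
      by (rule integral_ge_const) (use \<phi>ji lowb in auto)
    define g where "g = (\<lambda>x. U + (ln \<epsilon> - U) * indicator Z x)"
    have indm: "(\<lambda>x. (ln \<epsilon> - U) * indicator Z x) \<in> borel_measurable \<mu>"
      using Zs by (intro borel_measurable_times borel_measurable_const) simp
    have ind_i: "integrable \<mu> (\<lambda>x. (ln \<epsilon> - U) * indicator Z x)"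
    proof (rule integrable_const_bound[where B="\<bar>ln \<epsilon> - U\<bar>"])
      show "AE x in \<mu>. norm ((ln \<epsilon> - U) * indicator Z x) \<le> \<bar>ln \<epsilon> - U\<bar>"
        by (auto simp: indicator_def)
    qed (rule indm)
    have c_i: "integrable \<mu> (\<lambda>x. U)"
      by (rule integrable_const_bound[where B="\<bar>U\<bar>"]) auto
    have gi: "integrable \<mu> g" unfolding g_def by (rule Bochner_Integration.integrable_add[OF c_i ind_i])
    have ig: "integral\<^sup>L \<mu> g = U + (ln \<epsilon> - U) * \<zeta>"
    proof -
      have "integral\<^sup>L \<mu> g = integral\<^sup>L \<mu> (\<lambda>x. U) + integral\<^sup>L \<mu> (\<lambda>x. (ln \<epsilon> - U) * indicator Z x)"
        unfolding g_def by (rule Bochner_Integration.integral_add[OF c_i ind_i])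
      also have "integral\<^sup>L \<mu> (\<lambda>x. U) = U" using prob_space by simp
      also have "integral\<^sup>L \<mu> (\<lambda>x. (ln \<epsilon> - U) * indicator Z x) = (ln \<epsilon> - U) * integral\<^sup>L \<mu> (indicator Z)"
        by (rule integral_mult_right_zero)
      also have "integral\<^sup>L \<mu> (indicator Z) = \<zeta>"
        by (simp add: \<zeta>_def sp)
      finally show ?thesis .
    qed
    have "integral\<^sup>L \<mu> \<phi> \<le> integral\<^sup>L \<mu> g"
    proof (rule integral_mono[OF \<phi>i gi])
      fix x show "\<phi> x \<le> g x"
        by (cases "x \<in> Z") (auto simp: g_def \<phi>Z \<phi>hi)
    qed
    also have "\<dots> \<le> d * c - 3"
    proof -
      have "(ln \<epsilon> - U) * \<zeta> \<le> (a - U) * \<zeta>"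
        using ep(3) zpos by (intro mult_right_mono) (auto simp: \<zeta>_def)
      also have "(a - U) * \<zeta> = d * c - 3 - U" using zpos by (simp add: a_def \<zeta>_def)
      finally show ?thesis using ig by linarith
    qed
    finally have ub: "integral\<^sup>L \<mu> \<phi> \<le> d * c - 3" .
    have "real N * integral\<^sup>L \<mu> \<phi> \<le> real N * (d * c - 3)"
      using ub by (intro mult_left_mono) auto
    then have "real N * (d * c) - real (card F) * G \<le> real N * (d * c - 3)"
      using lowi sumi by linarith
    then have "3 * real N \<le> real (card F) * G" by (simp add: algebra_simps)
    moreover have "real (card F) * G \<ge> 0" using E00 by (simp add: G_def)
    ultimately show False using NG by linarith
  qed
qed


theorem corollary2p2:
  fixes f :: "'a::metric_space \<Rightarrow> 'a"
    and A :: "'a \<Rightarrow> real^'d^'d"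
    and \<alpha> c :: real
  assumes "compact (UNIV :: 'a set)"
    and "\<exists>g. homeomorphism UNIV UNIV f g"
    and "anosov_closing f"
    and "\<alpha> > 0" and "holder \<alpha> A"
    and "\<forall>p. periodic_point f p \<longrightarrow> (\<forall>L\<in>lyapunov_exponents f A p. L \<ge> ereal c)"
  shows "\<forall>\<mu>. prob_space \<mu> \<and> sets \<mu> = sets borel \<and> invariant_measure f \<mu> \<longrightarrow>
           (AE x in \<mu>. invertible (A x))"
  proof (intro allI impI)
  fix \<mu> :: "'a measure"
  assume "prob_space \<mu> \<and> sets \<mu> = sets borel \<and> invariant_measure f \<mu>"
  then show "AE x in \<mu>. invertible (A x)"
    using main_ae[OF assms(1,3,4,5,6)] by blast
qed

end
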